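(* Consider a mean-variance team stochastic game as described in the context. Let $\boldsymbol{\mu},\boldsymbol{\mu}'\in\mathcal{U}$ and for $\delta\in[0,1]$ let $\delta_{\boldsymbol{\mu}}^{\boldsymbol{\mu}'}$ be the (centralized) stationary policy $\delta_{\boldsymbol{\mu}}^{\boldsymbol{\mu}'}(\boldsymbol{a}|s)=(1-\delta)\boldsymbol{\mu}(\boldsymbol{a}|s)+\delta\boldsymbol{\mu}'(\boldsymbol{a}|s)$ (the joint action follows $\boldsymbol{\mu}$ with probability $1-\delta$ and $\boldsymbol{\mu}'$ with probability $\delta$). Then $$\frac{\mathrm{d}J(\delta_{\boldsymbol{\mu}}^{\boldsymbol{\mu}'})}{\mathrm{d}\delta}\Big|_{\delta=0}=\mathbb{E}_{s\sim\pi^{\boldsymbol{\mu}},\,\boldsymbol{a}\sim\boldsymbol{\mu}'(\cdot|s)}\big[A_f^{\boldsymbol{\mu}}(s,\boldsymbol{a})\big],$$ where the derivative at $\delta=0$ is the one-sided (right) derivative.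
   Context: A team stochastic game consists of a finite set of agents $\mathcal{N}=\{1,\dots,N\}$, a finite state space $\mathcal{S}$, finite action sets $\mathcal{A}_i$ with joint action set $\mathcal{A}=\prod_i\mathcal{A}_i$, a transition kernel $P(s'|s,\boldsymbol{a})$ and a common reward $r:\mathcal{S}\times\mathcal{A}\to\mathbb{R}$. A policy of agent $i$ is $\mu_i:\mathcal{S}\to\Delta(\mathcal{A}_i)$ (set $\mathcal{U}_i$); a joint policy $\boldsymbol{\mu}\in\mathcal{U}=\prod_i\mathcal{U}_i$ has $\boldsymbol{\mu}(\boldsymbol{a}|s)=\prod_i\mu_i(a_i|s)$. More generally, any centralized stationary policy $\sigma:\mathcal{S}\to\Delta(\mathcal{A})$ induces the chain $P^{\sigma}(s'|s)=\sum_{\boldsymbol{a}}\sigma(\boldsymbol{a}|s)P(s'|s,\boldsymbol{a})$. Standing assumption: for every joint policy $\boldsymbol{\mu}\in\mathcal{U}$ the induced chain is ergodic; $\pi^{\sigma}$ denotes the stationary distribution of the chain induced by $\sigma$. For such $\sigma$: $\eta^{\sigma}=\sum_s\pi^{\sigma}(s)\sum_{\boldsymbol{a}}\sigma(\boldsymbol{a}|s)r(s,\boldsymbol{a})$, $\zeta^{\sigma}=\sum_s\pi^{\sigma}(s)\sum_{\boldsymbol{a}}\sigma(\boldsymbol{a}|s)(r(s,\boldsymbol{a})-\eta^{\sigma})^2$, and for fixed $\beta\ge0$, $J(\sigma)=J^{\sigma}=\eta^{\sigma}-\beta\zeta^{\sigma}$. Surrogate reward $f^{\sigma}(s,\boldsymbol{a})=r(s,\boldsymbol{a})-\beta(r(s,\boldsymbol{a})-\eta^{\sigma})^2$,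 $f^{\sigma}(s)=\sum_{\boldsymbol{a}}\sigma(\boldsymbol{a}|s)f^{\sigma}(s,\boldsymbol{a})$. $V_f^{\sigma}$ is a solution of the Poisson equation $V(s)=f^{\sigma}(s)-J^{\sigma}+\sum_{s'}P^{\sigma}(s'|s)V(s')$ (unique up to an additive constant, irrelevant below); $Q_f^{\sigma}(s,\boldsymbol{a})=f^{\sigma}(s,\boldsymbol{a})-J^{\sigma}+\sum_{s'}P(s'|s,\boldsymbol{a})V_f^{\sigma}(s')$; $A_f^{\sigma}(s,\boldsymbol{a})=Q_f^{\sigma}(s,\boldsymbol{a})-V_f^{\sigma}(s)$. *)

theory Defs
  imports Complex_Main
begin

(* States: a finite type 's.  Agents: a finite type 'i.  Agent i's action set: A i :: 'b set.
   Joint actions: functions a :: 'i => 'b with a i \<in> A i for all i. *)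

definition joint_actions :: "('i \<Rightarrow> 'b set) \<Rightarrow> ('i \<Rightarrow> 'b) set" where
  "joint_actions A = {a. \<forall>i. a i \<in> A i}"

definition team_game :: "('i::finite \<Rightarrow> 'b set) \<Rightarrow> ('s::finite \<Rightarrow> ('i \<Rightarrow> 'b) \<Rightarrow> 's \<Rightarrow> real) \<Rightarrow> bool" where
  "team_game A P \<longleftrightarrow> (\<forall>i. finite (A i) \<and> A i \<noteq> {}) \<and>
     (\<forall>s. \<forall>a\<in>joint_actions A. (\<forall>s'. P s a s' \<ge> 0) \<and> (\<Sum>s'\<in>UNIV. P s a s') = 1)"

definition local_policy :: "'b set \<Rightarrow> ('s \<Rightarrow> 'b \<Rightarrow> real) \<Rightarrow> bool" where
  "local_policy Ai m \<longleftrightarrow> (\<forall>s. (\<forall>b\<in>Ai. m s b \<ge> 0) \<and> (\<Sum>b\<in>Ai. m s b) = 1)"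

definition joint_policies :: "('i \<Rightarrow> 'b set) \<Rightarrow> ('i \<Rightarrow> 's \<Rightarrow> 'b \<Rightarrow> real) set" where
  "joint_policies A = {mu. \<forall>i. local_policy (A i) (mu i)}"

definition joint_prob :: "('i::finite \<Rightarrow> 's \<Rightarrow> 'b \<Rightarrow> real) \<Rightarrow> 's \<Rightarrow> ('i \<Rightarrow> 'b) \<Rightarrow> real" where
  "joint_prob mu s a = (\<Prod>i\<in>UNIV. mu i s (a i))"

definition induced_chain :: "('i \<Rightarrow> 'b set) \<Rightarrow> ('s \<Rightarrow> ('i \<Rightarrow> 'b) \<Rightarrow> 's \<Rightarrow> real)
    \<Rightarrow> ('s \<Rightarrow> ('i \<Rightarrow> 'b) \<Rightarrow> real) \<Rightarrow> 's \<Rightarrow> 's \<Rightarrow> real" where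
  "induced_chain A P sigma s s' = (\<Sum>a\<in>joint_actions A. sigma s a * P s a s')"

fun nstep :: "('s::finite \<Rightarrow> 's \<Rightarrow> real) \<Rightarrow> nat \<Rightarrow> 's \<Rightarrow> 's \<Rightarrow> real" where
  "nstep Q 0 s s' = (if s = s' then 1 else 0)"
| "nstep Q (Suc n) s s' = (\<Sum>t\<in>UNIV. nstep Q n s t * Q t s')"

definition irreducible_chain :: "('s::finite \<Rightarrow> 's \<Rightarrow> real) \<Rightarrow> bool" where
  "irreducible_chain Q \<longleftrightarrow> (\<forall>s s'. \<exists>n>0. nstep Q n s s' > 0)"

definition aperiodic_chain :: "('s::finite \<Rightarrow> 's \<Rightarrow> real) \<Rightarrow> bool" where
  "aperiodic_chain Q \<longleftrightarrow> (\<forall>s. Gcd {n::nat. n > 0 \<and> nstep Q n s s > 0} = 1)"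

definition ergodic_chain :: "('s::finite \<Rightarrow> 's \<Rightarrow> real) \<Rightarrow> bool" where
  "ergodic_chain Q \<longleftrightarrow> irreducible_chain Q \<and> aperiodic_chain Q"

definition is_stationary :: "('s::finite \<Rightarrow> 's \<Rightarrow> real) \<Rightarrow> ('s \<Rightarrow> real) \<Rightarrow> bool" where
  "is_stationary Q p \<longleftrightarrow> (\<forall>s. p s \<ge> 0) \<and> (\<Sum>s\<in>UNIV. p s) = 1 \<and>
     (\<forall>s'. (\<Sum>s\<in>UNIV. p s * Q s s') = p s')"

(* the stationary distribution pi^sigma (unique for ergodic chains) *)
definition stat_dist :: "('s::finite \<Rightarrow> 's \<Rightarrow> real) \<Rightarrow> 's \<Rightarrow> real" where
  "stat_dist Q = (THE p. is_stationary Q p)"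

definition pi_pol where
  "pi_pol A P sigma = stat_dist (induced_chain A P sigma)"

definition eta where
  "eta A P r sigma = (\<Sum>s\<in>UNIV. pi_pol A P sigma s * (\<Sum>a\<in>joint_actions A. sigma s a * r s a))"

definition zeta where
  "zeta A P r sigma = (\<Sum>s\<in>UNIV. pi_pol A P sigma s *
      (\<Sum>a\<in>joint_actions A. sigma s a * (r s a - eta A P r sigma)^2))"

definition Jmv where
  "Jmv A P r \<beta> sigma = eta A P r sigma - \<beta> * zeta A P r sigma"

definition f_sa where
  "f_sa A P r \<beta> sigma s a = r s a - \<beta> * (r s a - eta A P r sigma)^2"

definition f_s where
  "f_s A P r \<beta> sigma s = (\<Sum>a\<in>joint_actions A. sigma s a * f_sa A P r \<beta> sigma s a)"

definition poisson_sol where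
  "poisson_sol A P r \<beta> sigma V \<longleftrightarrow> (\<forall>s. V s = f_s A P r \<beta> sigma s - Jmv A P r \<beta> sigma +
      (\<Sum>s'\<in>UNIV. induced_chain A P sigma s s' * V s'))"

(* V_f^sigma: some solution of the Poisson equation (unique up to an additive constant) *)
definition V_f where
  "V_f A P r \<beta> sigma = (SOME V. poisson_sol A P r \<beta> sigma V)"

definition Q_f where
  "Q_f A P r \<beta> sigma s a = f_sa A P r \<beta> sigma s a - Jmv A P r \<beta> sigma +
      (\<Sum>s'\<in>UNIV. P s a s' * V_f A P r \<beta> sigma s')"

definition A_f where
  "A_f A P r \<beta> sigma s a = Q_f A P r \<beta> sigma s a - V_f A P r \<beta> sigma s"

definition mix_pol where
  "mix_pol mu mu' \<delta> s a = (1 - \<delta>) * joint_prob mu s a + \<delta> * joint_prob mu' s a"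

end

theory Submission imports Defs "HOL-Analysis.Analysis" begin

definition stoch :: "('s::finite \<Rightarrow> 's \<Rightarrow> real) \<Rightarrow> bool" where
  "stoch Q \<longleftrightarrow> (\<forall>s t. Q s t \<ge> 0) \<and> (\<forall>s. (\<Sum>t\<in>UNIV. Q s t) = 1)"

lemma nstep_nonneg: "stoch Q \<Longrightarrow> nstep Q n s t \<ge> 0"
  by (induction n arbitrary: t) (auto simp: stoch_def intro!: sum_nonneg)

lemma left_fixed_pos:
  assumes Q: "stoch Q" and fx: "\<forall>t. (\<Sum>s\<in>UNIV. y s * Q s t) = y t"
  shows "(\<Sum>s\<in>UNIV. max (y s) 0 * Q s t) = max (y t) 0"
proof -
  have ge: "(\<Sum>s\<in>UNIV. max (y s) 0 * Q s t) \<ge> max (y t) 0" for t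
  proof -
    have "(\<Sum>s\<in>UNIV. max (y s) 0 * Q s t) \<ge> (\<Sum>s\<in>UNIV. y s * Q s t)"
      using Q by (auto simp: stoch_def intro!: sum_mono mult_right_mono)
    moreover have "(\<Sum>s\<in>UNIV. max (y s) 0 * Q s t) \<ge> 0"
      using Q by (auto simp: stoch_def intro!: sum_nonneg)
    ultimately show ?thesis using fx by simp
  qed
  have "(\<Sum>t\<in>UNIV. \<Sum>s\<in>UNIV. max (y s) 0 * Q s t) = (\<Sum>s\<in>UNIV. max (y s) 0 * (\<Sum>t\<in>UNIV. Q s t))"
    by (subst sum.swap) (simp add: sum_distrib_left)
  also have "\<dots> = (\<Sum>t\<in>UNIV. max (y t) 0)" using Q by (simp add: stoch_def)
  finally have "(\<Sum>t\<in>UNIV. (\<Sum>s\<in>UNIV. max (y s) 0 * Q s t) - max (y t) 0) = 0"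
    by (simp add: sum_subtractf)
  then have "\<forall>t\<in>UNIV. (\<Sum>s\<in>UNIV. max (y s) 0 * Q s t) - max (y t) 0 = 0"
    using ge by (subst (asm) sum_nonneg_eq_0_iff) auto
  then show ?thesis by simp
qed

lemma support_spread:
  assumes Q: "stoch Q" and irr: "irreducible_chain Q"
    and fx: "\<forall>t. (\<Sum>s\<in>UNIV. z s * Q s t) = z t" and nn: "\<forall>s. z s \<ge> 0" and z0: "z s0 > 0"
  shows "z t > 0"
proof -
  have "\<forall>t. nstep Q n s0 t > 0 \<longrightarrow> z t > 0" for n
  proof (induction n)
    case 0 then show ?case using z0 by simp
  next
    case (Suc n)
    show ?case
    proof (intro allI impI)
      fix t assume "nstep Q (Suc n) s0 t > 0"
      then have "0 < (\<Sum>u\<in>UNIV. nstep Q n s0 u * Q u t)" by simp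
      then obtain u where u: "nstep Q n s0 u * Q u t > 0"
        by (metis (no_types, lifting) not_le sum_nonpos)
      have "nstep Q n s0 u \<ge> 0" "Q u t \<ge> 0" using Q nstep_nonneg by (auto simp: stoch_def)
      with u have "nstep Q n s0 u > 0" "Q u t > 0" by (auto simp: zero_less_mult_iff)
      with Suc have "z u * Q u t > 0" by simp
      also have "z u * Q u t \<le> (\<Sum>s\<in>UNIV. z s * Q s t)"
        by (rule member_le_sum) (use Q nn in \<open>auto simp: stoch_def\<close>)
      finally show "z t > 0" using fx by simp
    qed
  qed
  moreover obtain n where "n > 0" "nstep Q n s0 t > 0" using irr by (auto simp: irreducible_chain_def)
  ultimately show ?thesis by blast
qed

lemma fixed_sign:
  assumes Q: "stoch Q" and irr: "irreducible_chain Q"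
    and fx: "\<forall>t. (\<Sum>s\<in>UNIV. y s * Q s t) = y t" and nz: "\<exists>s. y s \<noteq> 0"
  shows "(\<forall>t. y t > 0) \<or> (\<forall>t. y t < 0)"
proof (cases "\<exists>s. y s > 0")
  case True
  then obtain s0 where "y s0 > 0" by blast
  have mx: "max (y t) 0 > 0" for t
    by (rule support_spread[OF Q irr, of "\<lambda>s. max (y s) 0" s0])
       (use left_fixed_pos[OF Q fx] \<open>y s0 > 0\<close> in auto)
  have "y t > 0" for t using mx[of t] by (simp add: max_def split: if_splits)
  then show ?thesis by blast
next
  case False
  then obtain s0 where "y s0 < 0" using nz by (metis linorder_neqE_linordered_idom)
  have fx': "\<forall>t. (\<Sum>s\<in>UNIV. (- y s) * Q s t) = - y t" using fx by (simp add: sum_negf)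
  have mx: "max (- y t) 0 > 0" for t
    by (rule support_spread[OF Q irr, of "\<lambda>s. max (- y s) 0" s0])
       (use left_fixed_pos[OF Q fx'] \<open>y s0 < 0\<close> in auto)
  have "y t < 0" for t using mx[of t] by (simp add: max_def split: if_splits)
  then show ?thesis by blast
qed

definition IQ :: "('s::finite \<Rightarrow> 's \<Rightarrow> real) \<Rightarrow> real^'s^'s" where
  "IQ Q = (\<chi> i j. (if i = j then 1 else 0) - Q i j)"

lemma IQ_mv: "(IQ Q *v x) $ i = x $ i - (\<Sum>j\<in>UNIV. Q i j * x $ j)"
  by (simp add: IQ_def matrix_vector_mult_def left_diff_distrib sum_subtractf if_distrib[where f="\<lambda>u. u * _"] cong: if_cong)

lemma IQ_vm: "(x v* IQ Q) $ j = x $ j - (\<Sum>i\<in>UNIV. x $ i * Q i j)"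
  by (simp add: IQ_def vector_matrix_mult_def right_diff_distrib sum_subtractf if_distrib[where f="\<lambda>u. _ * u"] cong: if_cong)

lemma stationary_exists:
  assumes Q: "stoch Q" and irr: "irreducible_chain Q"
  shows "\<exists>p. is_stationary Q p"
proof -
  have "IQ Q *v vec 1 = 0"
    using Q by (simp add: vec_eq_iff IQ_mv stoch_def flip: sum_distrib_right)
  moreover have "(vec 1 :: real^'a) \<noteq> 0" by (simp add: vec_eq_iff)
  ultimately have "rank (IQ Q) \<noteq> CARD('a)"
    using matrix_nonfull_linear_equations_eq by blast
  then have "rank (transpose (IQ Q)) \<noteq> CARD('a)" by (simp add: rank_transpose)
  then obtain y where y: "y \<noteq> 0" "transpose (IQ Q) *v y = 0"
    using matrix_nonfull_linear_equations_eq by blast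
  then have yz: "y v* IQ Q = 0" by (simp only: transpose_matrix_vector)
  have fx: "\<forall>t. (\<Sum>s\<in>UNIV. y $ s * Q s t) = y $ t"
  proof
    fix t have "(y v* IQ Q) $ t = 0" using yz by simp
    then show "(\<Sum>s\<in>UNIV. y $ s * Q s t) = y $ t" by (simp add: IQ_vm)
  qed
  have nz: "\<exists>s. y $ s \<noteq> 0" using y(1) by (simp add: vec_eq_iff)
  define S where "S = (\<Sum>s\<in>UNIV. y $ s)"
  from fixed_sign[OF Q irr, of "\<lambda>s. y $ s"] fx nz
  have sg: "(\<forall>t. y $ t > 0) \<or> (\<forall>t. y $ t < 0)" by blast
  have Sne: "S \<noteq> 0"
  proof -
    have "S > 0 \<or> S < 0"
      using sg unfolding S_def
    proof
      assume "\<forall>t. y $ t > 0" then show "sum (($) y) UNIV > 0 \<or> sum (($) y) UNIV < 0"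
        by (simp add: sum_pos)
    next
      assume "\<forall>t. y $ t < 0"
      then have "(\<Sum>s\<in>UNIV. - y $ s) > 0" by (simp add: sum_pos)
      then show "sum (($) y) UNIV > 0 \<or> sum (($) y) UNIV < 0" by (simp add: sum_negf)
    qed
    then show ?thesis by auto
  qed
  have nn: "y $ s / S \<ge> 0" for s
    using sg
  proof
    assume a: "\<forall>t. y $ t > 0"
    then have "S > 0" unfolding S_def by (simp add: sum_pos)
    then show ?thesis using a by (simp add: less_imp_le)
  next
    assume a: "\<forall>t. y $ t < 0"
    then have "(\<Sum>s\<in>UNIV. - y $ s) > 0" by (simp add: sum_pos)
    then have "S < 0" unfolding S_def by (simp add: sum_negf)
    then show ?thesis using a[rule_format, of s] by (simp add: divide_nonpos_neg less_imp_le)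
  qed
  show ?thesis
  proof (rule exI[of _ "\<lambda>s. y $ s / S"], unfold is_stationary_def, intro conjI allI)
    show "0 \<le> y $ s / S" for s by (rule nn)
    show "(\<Sum>s\<in>UNIV. y $ s / S) = 1" using Sne by (simp add: S_def flip: sum_divide_distrib)
    show "(\<Sum>s\<in>UNIV. y $ s / S * Q s t) = y $ t / S" for t
      using fx by (simp add: times_divide_eq_left flip: sum_divide_distrib)
  qed
qed


lemma poisson_exists:
  assumes Q: "stoch Q" and irr: "irreducible_chain Q" and st: "is_stationary Q p"
  shows "\<exists>V. \<forall>s. V s = g s - (\<Sum>t\<in>UNIV. p t * g t) + (\<Sum>t\<in>UNIV. Q s t * V t)"
proof -
  define M where "M = IQ Q"
  define pv where "pv = (\<chi> s. p s)"
  define R where "R = range (\<lambda>x. M *v x)"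
  define H where "H = {x. pv \<bullet> x = 0}"
  define c where "c = (\<Sum>t\<in>UNIV. p t * g t)"
  have sR: "subspace R" unfolding R_def
    by (rule linear_subspace_image) auto
  have sH: "subspace H" unfolding H_def by (rule subspace_hyperplane)
  have pvM: "pv v* M = 0"
  proof -
    have "(pv v* M) $ t = 0" for t
      using st by (simp add: M_def IQ_vm pv_def is_stationary_def)
    then show ?thesis by (simp add: vec_eq_iff)
  qed
  have RH: "R \<subseteq> H"
  proof
    fix x assume "x \<in> R"
    then obtain z where z: "x = M *v z" by (auto simp: R_def)
    have "pv \<bullet> (M *v z) = (pv v* M) \<bullet> z" by (simp only: dot_lmul_matrix)
    then show "x \<in> H" using z pvM by (simp add: H_def)
  qed
  have C0: "{y \<in> H. \<forall>x \<in> R. orthogonal x y} \<subseteq> {0}"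
  proof
    fix y assume y: "y \<in> {y \<in> H. \<forall>x \<in> R. orthogonal x y}"
    define w where "w = y v* M"
    have "orthogonal (M *v w) y" using y by (auto simp: R_def)
    then have "y \<bullet> (M *v w) = 0" by (simp add: orthogonal_def inner_commute)
    then have "w \<bullet> w = 0" by (simp add: w_def flip: dot_lmul_matrix)
    then have w0: "y v* M = 0" by (simp add: w_def)
    have fx: "\<forall>t. (\<Sum>s\<in>UNIV. y $ s * Q s t) = y $ t"
    proof
      fix t have "(y v* M) $ t = 0" using w0 by simp
      then show "(\<Sum>s\<in>UNIV. y $ s * Q s t) = y $ t" by (simp add: M_def IQ_vm)
    qed
    have py: "(\<Sum>s\<in>UNIV. p s * y $ s) = 0"
      using y by (simp add: H_def pv_def inner_vec_def)
    obtain s0 where s0: "p s0 > 0"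
    proof -
      have "\<exists>s. p s \<noteq> 0"
      proof (rule ccontr)
        assume "\<not> (\<exists>s. p s \<noteq> 0)"
        then have "(\<Sum>s\<in>UNIV. p s) = 0" by simp
        then show False using st by (simp add: is_stationary_def)
      qed
      then show ?thesis using that st by (force simp: is_stationary_def order_le_less)
    qed
    have pnn: "\<forall>s. p s \<ge> 0" using st by (simp add: is_stationary_def)
    show "y \<in> {0}"
    proof (rule ccontr)
      assume "y \<notin> {0}"
      then have nz: "\<exists>s. y $ s \<noteq> 0" by (simp add: vec_eq_iff)
      from fixed_sign[OF Q irr, of "\<lambda>s. y $ s"] fx nz
      have "(\<forall>t. y $ t > 0) \<or> (\<forall>t. y $ t < 0)" by blast
      then show False
      proof
        assume a: "\<forall>t. y $ t > 0"
        have "(\<Sum>s\<in>UNIV. p s * y $ s) > 0"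
          by (rule sum_pos2[of UNIV s0]) (use a s0 pnn in \<open>auto intro: mult_nonneg_nonneg less_imp_le\<close>)
        then show False using py by simp
      next
        assume a: "\<forall>t. y $ t < 0"
        have "(\<Sum>s\<in>UNIV. p s * (- y $ s)) > 0"
          by (rule sum_pos2[of UNIV s0]) (use a s0 pnn in \<open>auto simp: mult_pos_neg mult_le_0_iff less_imp_le\<close>)
        then show False using py by (simp add: sum_negf)
      qed
    qed
  qed
  have "dim {y \<in> H. \<forall>x \<in> R. orthogonal x y} + dim R = dim H"
    by (rule dim_subspace_orthogonal_to_vectors[OF sR sH RH])
  moreover have "dim {y \<in> H. \<forall>x \<in> R. orthogonal x y} = 0" using C0 by simp
  ultimately have "dim R = dim H" by simp
  then have RH': "R = H" using subspace_dim_equal[OF sR sH RH] by simp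
  define gv where "gv = (\<chi> s. g s - c)"
  have "gv \<in> H"
  proof -
    have "pv \<bullet> gv = (\<Sum>s\<in>UNIV. p s * g s) - c * (\<Sum>s\<in>UNIV. p s)"
      by (simp add: pv_def gv_def inner_vec_def right_diff_distrib sum_subtractf sum_distrib_left mult.commute)
    then show ?thesis using st by (simp add: H_def c_def is_stationary_def)
  qed
  then obtain x where x: "M *v x = gv" using RH' by (auto simp: R_def)
  show ?thesis
  proof (rule exI[of _ "\<lambda>s. x $ s"], intro allI)
    fix s
    have "(M *v x) $ s = gv $ s" using x by simp
    then show "x $ s = g s - (\<Sum>t\<in>UNIV. p t * g t) + (\<Sum>t\<in>UNIV. Q s t * x $ t)"
      by (simp add: M_def IQ_mv gv_def c_def algebra_simps)
  qed
qed

lemma stationary_unique: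
  fixes Q :: "'s::finite \<Rightarrow> 's \<Rightarrow> real"
  assumes Q: "stoch Q" and irr: "irreducible_chain Q"
    and p: "is_stationary Q p" and q: "is_stationary Q q"
  shows "q = p"
proof (rule ext)
  fix s0 :: 's
  define g where "g = (\<lambda>s. if s = s0 then 1 else (0::real))"
  obtain V where V: "\<forall>s. V s = g s - (\<Sum>t\<in>UNIV. p t * g t) + (\<Sum>t\<in>UNIV. Q s t * V t)"
    using poisson_exists[OF Q irr p] by blast
  define c where "c = (\<Sum>t\<in>UNIV. p t * g t)"
  have c: "c = p s0" by (simp add: c_def g_def if_distrib[where f="\<lambda>u. _ * u"] cong: if_cong)
  have gs: "g s = V s + c - (\<Sum>t\<in>UNIV. Q s t * V t)" for s
    using V[rule_format, of s] by (simp add: c_def)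
  have "q s0 = (\<Sum>s\<in>UNIV. q s * g s)"
    by (simp add: g_def if_distrib[where f="\<lambda>u. _ * u"] cong: if_cong)
  also have "\<dots> = (\<Sum>s\<in>UNIV. q s * V s) + c * (\<Sum>s\<in>UNIV. q s) - (\<Sum>s\<in>UNIV. \<Sum>t\<in>UNIV. q s * Q s t * V t)"
    by (simp add: gs algebra_simps sum.distrib sum_subtractf sum_distrib_left sum_distrib_right)
  also have "(\<Sum>s\<in>UNIV. \<Sum>t\<in>UNIV. q s * Q s t * V t) = (\<Sum>t\<in>UNIV. (\<Sum>s\<in>UNIV. q s * Q s t) * V t)"
    by (subst sum.swap) (simp add: sum_distrib_right)
  also have "\<dots> = (\<Sum>t\<in>UNIV. q t * V t)" using q by (simp add: is_stationary_def)
  finally show "q s0 = p s0" using q c by (simp add: is_stationary_def)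
qed

lemma stat_dist_is:
  assumes Q: "stoch Q" and irr: "irreducible_chain Q"
  shows "is_stationary Q (stat_dist Q)"
proof -
  obtain p where p: "is_stationary Q p" using stationary_exists[OF Q irr] by blast
  have "\<exists>!p. is_stationary Q p"
    using p stationary_unique[OF Q irr] by blast
  then show ?thesis unfolding stat_dist_def by (rule theI')
qed


lemma shift_identity:
  assumes st: "is_stationary Q' p"
    and Qd: "\<And>s t. Q' s t = Q0 s t + \<delta> * D s t"
    and V: "\<And>s. V s = g s - c + (\<Sum>t\<in>UNIV. Q0 s t * V t)"
  shows "(\<Sum>s\<in>UNIV. p s * g s) = c + \<delta> * (\<Sum>s\<in>UNIV. p s * (\<Sum>t\<in>UNIV. D s t * V t))"
proof -
  have gs: "g s = V s + c - (\<Sum>t\<in>UNIV. Q' s t * V t) + \<delta> * (\<Sum>t\<in>UNIV. D s t * V t)" for s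
    using V[of s] by (simp add: Qd algebra_simps sum.distrib sum_distrib_left)
  have sw: "(\<Sum>s\<in>UNIV. p s * (\<Sum>t\<in>UNIV. Q' s t * V t)) = (\<Sum>t\<in>UNIV. p t * V t)"
  proof -
    have "(\<Sum>s\<in>UNIV. p s * (\<Sum>t\<in>UNIV. Q' s t * V t)) = (\<Sum>s\<in>UNIV. \<Sum>t\<in>UNIV. p s * Q' s t * V t)"
      by (simp add: sum_distrib_left mult.assoc)
    also have "\<dots> = (\<Sum>t\<in>UNIV. \<Sum>s\<in>UNIV. p s * Q' s t * V t)" by (rule sum.swap)
    also have "\<dots> = (\<Sum>t\<in>UNIV. (\<Sum>s\<in>UNIV. p s * Q' s t) * V t)" by (simp add: sum_distrib_right)
    also have "\<dots> = (\<Sum>t\<in>UNIV. p t * V t)" using st by (simp add: is_stationary_def)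
    finally show ?thesis .
  qed
  have "(\<Sum>s\<in>UNIV. p s * g s) = (\<Sum>s\<in>UNIV. p s * V s) + c * (\<Sum>s\<in>UNIV. p s)
      - (\<Sum>s\<in>UNIV. p s * (\<Sum>t\<in>UNIV. Q' s t * V t)) + \<delta> * (\<Sum>s\<in>UNIV. p s * (\<Sum>t\<in>UNIV. D s t * V t))"
    by (simp add: gs algebra_simps sum.distrib sum_subtractf sum_distrib_left)
  then show ?thesis using sw st by (simp add: is_stationary_def)
qed

lemma stoch_mix:
  assumes "stoch Q0" "stoch Q1" "0 \<le> \<delta>" "\<delta> \<le> 1"
  shows "stoch (\<lambda>s t. (1 - \<delta>) * Q0 s t + \<delta> * Q1 s t)"
  using assms by (auto simp: stoch_def sum.distrib simp flip: sum_distrib_left)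

lemma nstep_mix_ge:
  assumes Q0: "stoch Q0" and Q1: "stoch Q1" and d: "0 \<le> \<delta>" "\<delta> \<le> 1"
  shows "nstep (\<lambda>s t. (1 - \<delta>) * Q0 s t + \<delta> * Q1 s t) n s t \<ge> (1 - \<delta>)^n * nstep Q0 n s t"
proof (induction n arbitrary: t)
  case 0 then show ?case by simp
next
  case (Suc n)
  let ?Q = "\<lambda>s t. (1 - \<delta>) * Q0 s t + \<delta> * Q1 s t"
  have sQ: "stoch ?Q" by (rule stoch_mix[OF Q0 Q1 d])
  have "(1 - \<delta>)^(Suc n) * nstep Q0 (Suc n) s t = (\<Sum>u\<in>UNIV. ((1 - \<delta>)^n * nstep Q0 n s u) * ((1 - \<delta>) * Q0 u t))"
    by (simp add: sum_distrib_left mult_ac)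
  also have "\<dots> \<le> (\<Sum>u\<in>UNIV. nstep ?Q n s u * ?Q u t)"
  proof (rule sum_mono)
    fix u
    show "((1 - \<delta>)^n * nstep Q0 n s u) * ((1 - \<delta>) * Q0 u t) \<le> nstep ?Q n s u * ?Q u t"
      apply (rule mult_mono)
      using Suc.IH[of u] nstep_nonneg[OF sQ] Q0 Q1 d by (auto simp: stoch_def)
  qed
  finally show ?case by simp
qed

lemma irreducible_mix:
  assumes Q0: "stoch Q0" and Q1: "stoch Q1" and d: "0 \<le> \<delta>" "\<delta> < 1"
    and irr: "irreducible_chain Q0"
  shows "irreducible_chain (\<lambda>s t. (1 - \<delta>) * Q0 s t + \<delta> * Q1 s t)"
  unfolding irreducible_chain_def
proof (intro allI)
  fix s s'
  obtain n where n: "n > 0" "nstep Q0 n s s' > 0" using irr by (auto simp: irreducible_chain_def)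
  have "0 < (1 - \<delta>)^n * nstep Q0 n s s'" using n d by simp
  also have "\<dots> \<le> nstep (\<lambda>s t. (1 - \<delta>) * Q0 s t + \<delta> * Q1 s t) n s s'"
    by (rule nstep_mix_ge) (use Q0 Q1 d in auto)
  finally show "\<exists>n>0. 0 < nstep (\<lambda>s t. (1 - \<delta>) * Q0 s t + \<delta> * Q1 s t) n s s'" using n by blast
qed

lemma joint_actions_PiE: "joint_actions A = Pi\<^sub>E UNIV A"
  by (auto simp: joint_actions_def PiE_def Pi_def extensional_def)

lemma joint_prob_nonneg:
  "mu \<in> joint_policies A \<Longrightarrow> a \<in> joint_actions A \<Longrightarrow> joint_prob mu s a \<ge> 0"
  by (auto simp: joint_prob_def joint_policies_def local_policy_def joint_actions_def intro!: prod_nonneg)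

lemma joint_prob_sum:
  assumes "team_game A P" "mu \<in> joint_policies A"
  shows "(\<Sum>a\<in>joint_actions A. joint_prob mu s a) = 1"
proof -
  have "(\<Sum>a\<in>joint_actions A. joint_prob mu s a) = (\<Prod>i\<in>UNIV. \<Sum>b\<in>A i. mu i s b)"
    unfolding joint_actions_PiE joint_prob_def
    by (rule prod_sum_PiE[symmetric]) (use assms in \<open>auto simp: team_game_def\<close>)
  also have "\<dots> = 1" using assms(2) by (simp add: joint_policies_def local_policy_def)
  finally show ?thesis .
qed

lemma finite_joint_actions: "team_game A P \<Longrightarrow> finite (joint_actions A)"
  unfolding joint_actions_PiE by (rule finite_PiE) (auto simp: team_game_def)

lemma stoch_induced:
  assumes g: "team_game A P" and nn: "\<forall>s. \<forall>a\<in>joint_actions A. \<sigma> s a \<ge> 0"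
    and sm: "\<forall>s. (\<Sum>a\<in>joint_actions A. \<sigma> s a) = 1"
  shows "stoch (induced_chain A P \<sigma>)"
  unfolding stoch_def
proof (intro conjI allI)
  fix s t show "0 \<le> induced_chain A P \<sigma> s t"
    using g nn by (auto simp: induced_chain_def team_game_def intro!: sum_nonneg)
next
  fix s
  have "(\<Sum>t\<in>UNIV. induced_chain A P \<sigma> s t) = (\<Sum>a\<in>joint_actions A. \<sigma> s a * (\<Sum>t\<in>UNIV. P s a t))"
    unfolding induced_chain_def by (subst sum.swap) (simp add: sum_distrib_left)
  also have "\<dots> = (\<Sum>a\<in>joint_actions A. \<sigma> s a)" using g by (simp add: team_game_def)
  finally show "(\<Sum>t\<in>UNIV. induced_chain A P \<sigma> s t) = 1" using sm by simp
qed

lemma var_shift: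
  fixes w r :: "'a \<Rightarrow> real"
  assumes fin: "finite X" and w1: "(\<Sum>x\<in>X. w x) = 1" and e: "e = (\<Sum>x\<in>X. w x * r x)"
  shows "(\<Sum>x\<in>X. w x * (r x - c)^2) = (\<Sum>x\<in>X. w x * (r x - e)^2) + (e - c)^2"
proof -
  have "(\<Sum>x\<in>X. w x * (r x - c)^2) = (\<Sum>x\<in>X. w x * (r x - e)^2 + 2 * (e - c) * (w x * r x) - 2 * (e - c) * e * w x + (e - c)^2 * w x)"
    by (rule sum.cong) (auto simp: power2_eq_square algebra_simps)
  also have "\<dots> = (\<Sum>x\<in>X. w x * (r x - e)^2) + 2 * (e - c) * (\<Sum>x\<in>X. w x * r x) - 2 * (e - c) * e * (\<Sum>x\<in>X. w x) + (e - c)^2 * (\<Sum>x\<in>X. w x)"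
    by (simp add: sum.distrib sum_subtractf sum_distrib_left)
  finally show ?thesis using w1 e by simp
qed


lemma dsum:
  fixes p :: "'s::finite \<Rightarrow> real"
  shows "(\<Sum>s\<in>UNIV. p s * (\<Sum>a\<in>B. q s a * X s a)) = (\<Sum>z\<in>UNIV \<times> B. p (fst z) * q (fst z) (snd z) * X (fst z) (snd z))"
proof -
  have "(\<Sum>s\<in>UNIV. p s * (\<Sum>a\<in>B. q s a * X s a)) = (\<Sum>s\<in>UNIV. \<Sum>a\<in>B. p s * q s a * X s a)"
    by (simp add: sum_distrib_left mult.assoc)
  also have "\<dots> = (\<Sum>(s,a)\<in>UNIV \<times> B. p s * q s a * X s a)" by (rule sum.cartesian_product)
  also have "\<dots> = (\<Sum>z\<in>UNIV \<times> B. p (fst z) * q (fst z) (snd z) * X (fst z) (snd z))" by (simp add: case_prod_beta)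
  finally show ?thesis .
qed

lemma J_decomp:
  fixes \<sigma> :: "'s::finite \<Rightarrow> ('i \<Rightarrow> 'b) \<Rightarrow> real"
  assumes fin: "finite (joint_actions A)"
    and pis: "(\<Sum>s\<in>UNIV. pi_pol A P \<sigma> s) = 1"
    and sm: "\<forall>s. (\<Sum>a\<in>joint_actions A. \<sigma> s a) = 1"
  shows "Jmv A P r \<beta> \<sigma> = (\<Sum>s\<in>UNIV. pi_pol A P \<sigma> s * (\<Sum>a\<in>joint_actions A. \<sigma> s a * (r s a - \<beta> * (r s a - c)^2)))
          + \<beta> * (eta A P r \<sigma> - c)^2"
proof -
  define X where "X = (UNIV :: 's set) \<times> joint_actions A"
  define w where "w = (\<lambda>z. pi_pol A P \<sigma> (fst z) * \<sigma> (fst z) (snd z))"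
  define rr where "rr = (\<lambda>z. r (fst z) (snd z))"
  define e where "e = eta A P r \<sigma>"
  have finX: "finite X" using fin by (simp add: X_def)
  have w1: "(\<Sum>z\<in>X. w z) = 1"
  proof -
    have "(\<Sum>z\<in>X. w z) = (\<Sum>s\<in>UNIV. pi_pol A P \<sigma> s * (\<Sum>a\<in>joint_actions A. \<sigma> s a * 1))"
      by (simp only: dsum) (simp add: X_def w_def)
    then show ?thesis using sm pis by simp
  qed
  have e: "e = (\<Sum>z\<in>X. w z * rr z)"
    unfolding e_def eta_def by (simp only: dsum) (simp add: X_def w_def rr_def)
  have z: "zeta A P r \<sigma> = (\<Sum>z\<in>X. w z * (rr z - e)^2)"
    unfolding zeta_def e_def by (simp only: dsum) (simp add: X_def w_def rr_def)
  have T: "(\<Sum>s\<in>UNIV. pi_pol A P \<sigma> s * (\<Sum>a\<in>joint_actions A. \<sigma> s a * (r s a - \<beta> * (r s a - c)^2)))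
      = (\<Sum>z\<in>X. w z * (rr z - \<beta> * (rr z - c)^2))"
    by (simp only: dsum) (simp add: X_def w_def rr_def)
  also have "\<dots> = (\<Sum>z\<in>X. w z * rr z) - \<beta> * (\<Sum>z\<in>X. w z * (rr z - c)^2)"
    by (simp add: right_diff_distrib sum_subtractf sum_distrib_left mult_ac)
  also have "\<dots> = e - \<beta> * ((\<Sum>z\<in>X. w z * (rr z - e)^2) + (e - c)^2)"
    using var_shift[OF finX w1 e, of c] e by simp
  finally show ?thesis unfolding Jmv_def using z by (simp add: e_def algebra_simps)
qed


theorem lemma2:
  fixes A :: "'i::finite \<Rightarrow> 'b set"
    and P :: "'s::finite \<Rightarrow> ('i \<Rightarrow> 'b) \<Rightarrow> 's \<Rightarrow> real"
    and r :: "'s \<Rightarrow> ('i \<Rightarrow> 'b) \<Rightarrow> real"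
    and \<beta> :: real
    and mu mu' :: "'i \<Rightarrow> 's \<Rightarrow> 'b \<Rightarrow> real"
  assumes game: "team_game A P"
    and beta: "\<beta> \<ge> 0"
    and erg: "\<forall>nu\<in>joint_policies A. ergodic_chain (induced_chain A P (joint_prob nu))"
    and mu: "mu \<in> joint_policies A"
    and mu': "mu' \<in> joint_policies A"
  shows "((\<lambda>\<delta>. Jmv A P r \<beta> (mix_pol mu mu' \<delta>)) has_real_derivative
           (\<Sum>s\<in>UNIV. pi_pol A P (joint_prob mu) s *
              (\<Sum>a\<in>joint_actions A. joint_prob mu' s a * A_f A P r \<beta> (joint_prob mu) s a)))
         (at_right 0)"
proof -
  define JA where "JA = joint_actions A"
  define \<sigma>0 where "\<sigma>0 = joint_prob mu"
  define \<sigma>1 where "\<sigma>1 = joint_prob mu'"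
  define Q0 where "Q0 = induced_chain A P \<sigma>0"
  define Q1 where "Q1 = induced_chain A P \<sigma>1"
  define Qd where "Qd = (\<lambda>\<delta> s t. (1 - \<delta>) * Q0 s t + \<delta> * Q1 s t)"
  define \<pi> where "\<pi> = (\<lambda>\<delta>. pi_pol A P (mix_pol mu mu' \<delta>))"
  have fin: "finite JA" using finite_joint_actions[OF game] by (simp add: JA_def)
  have s0: "\<And>s. (\<Sum>a\<in>JA. \<sigma>0 s a) = 1" using joint_prob_sum[OF game mu] by (simp add: JA_def \<sigma>0_def)
  have s1: "\<And>s. (\<Sum>a\<in>JA. \<sigma>1 s a) = 1" using joint_prob_sum[OF game mu'] by (simp add: JA_def \<sigma>1_def)
  have n0: "\<And>s a. a \<in> JA \<Longrightarrow> \<sigma>0 s a \<ge> 0" using joint_prob_nonneg[OF mu] by (simp add: JA_def \<sigma>0_def)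
  have n1: "\<And>s a. a \<in> JA \<Longrightarrow> \<sigma>1 s a \<ge> 0" using joint_prob_nonneg[OF mu'] by (simp add: JA_def \<sigma>1_def)
  have stQ0: "stoch Q0" unfolding Q0_def by (rule stoch_induced[OF game]) (use n0 s0 in \<open>auto simp: JA_def\<close>)
  have stQ1: "stoch Q1" unfolding Q1_def by (rule stoch_induced[OF game]) (use n1 s1 in \<open>auto simp: JA_def\<close>)
  have irr0: "irreducible_chain Q0" using erg mu by (simp add: ergodic_chain_def Q0_def \<sigma>0_def)
  have chain: "induced_chain A P (mix_pol mu mu' \<delta>) = Qd \<delta>" for \<delta>
  proof (intro ext)
    fix s t
    have "induced_chain A P (mix_pol mu mu' \<delta>) s t = (\<Sum>a\<in>JA. (1 - \<delta>) * (\<sigma>0 s a * P s a t) + \<delta> * (\<sigma>1 s a * P s a t))"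
      unfolding induced_chain_def JA_def[symmetric]
      by (rule sum.cong) (simp_all add: mix_pol_def \<sigma>0_def \<sigma>1_def algebra_simps)
    also have "\<dots> = (1 - \<delta>) * (\<Sum>a\<in>JA. \<sigma>0 s a * P s a t) + \<delta> * (\<Sum>a\<in>JA. \<sigma>1 s a * P s a t)"
      by (simp only: sum.distrib sum_distrib_left[symmetric])
    also have "\<dots> = Qd \<delta> s t" by (simp add: Qd_def Q0_def Q1_def induced_chain_def JA_def)
    finally show "induced_chain A P (mix_pol mu mu' \<delta>) s t = Qd \<delta> s t" .
  qed
  have mix0: "mix_pol mu mu' 0 = \<sigma>0" by (simp add: fun_eq_iff mix_pol_def \<sigma>0_def)
  have Qd0: "Qd 0 = Q0" by (simp add: Qd_def)
  have stQd: "\<And>\<delta>. 0 \<le> \<delta> \<Longrightarrow> \<delta> < 1 \<Longrightarrow> stoch (Qd \<delta>)"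
    unfolding Qd_def by (rule stoch_mix[OF stQ0 stQ1]) auto
  have irrd: "\<And>\<delta>. 0 \<le> \<delta> \<Longrightarrow> \<delta> < 1 \<Longrightarrow> irreducible_chain (Qd \<delta>)"
    unfolding Qd_def by (rule irreducible_mix[OF stQ0 stQ1 _ _ irr0]) auto
  have stat: "\<And>\<delta>. 0 \<le> \<delta> \<Longrightarrow> \<delta> < 1 \<Longrightarrow> is_stationary (Qd \<delta>) (\<pi> \<delta>)"
    unfolding \<pi>_def pi_pol_def chain by (rule stat_dist_is[OF stQd irrd])
  define \<pi>0 where "\<pi>0 = \<pi> 0"
  have pi0: "pi_pol A P \<sigma>0 = \<pi>0" using mix0 by (simp add: \<pi>0_def \<pi>_def)
  have stat0: "is_stationary Q0 \<pi>0" using stat[of 0] Qd0 by (simp add: \<pi>0_def)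
  define D where "D = (\<lambda>s t. Q1 s t - Q0 s t)"
  have Qd_eq: "\<And>\<delta> s t. Qd \<delta> s t = Q0 s t + \<delta> * D s t" by (simp add: Qd_def D_def algebra_simps)
  have pi_nn: "\<And>\<delta> s. 0 \<le> \<delta> \<Longrightarrow> \<delta> < 1 \<Longrightarrow> 0 \<le> \<pi> \<delta> s"
    using stat by (simp add: is_stationary_def)
  have pi_sum: "\<And>\<delta>. 0 \<le> \<delta> \<Longrightarrow> \<delta> < 1 \<Longrightarrow> (\<Sum>s\<in>UNIV. \<pi> \<delta> s) = 1"
    using stat by (simp add: is_stationary_def)
  have pi_le1: "\<And>\<delta> s. 0 \<le> \<delta> \<Longrightarrow> \<delta> < 1 \<Longrightarrow> \<pi> \<delta> s \<le> 1"
  proof -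
    fix \<delta> s assume d: "0 \<le> (\<delta>::real)" "\<delta> < 1"
    have "\<pi> \<delta> s \<le> (\<Sum>s\<in>UNIV. \<pi> \<delta> s)" by (rule member_le_sum) (use pi_nn d in auto)
    then show "\<pi> \<delta> s \<le> 1" using pi_sum d by simp
  qed
  have ev: "eventually (\<lambda>\<delta>. 0 < \<delta> \<and> \<delta> < 1) (at_right (0::real))"
    using eventually_at_right_real[of 0 1] by (auto elim: eventually_mono)
  have pt: "((\<lambda>\<delta>. \<pi> \<delta> s0) \<longlongrightarrow> \<pi>0 s0) (at_right 0)" for s0
  proof -
    define g where "g = (\<lambda>s. if s = s0 then 1 else (0::real))"
    obtain W where W: "\<forall>s. W s = g s - (\<Sum>t\<in>UNIV. \<pi>0 t * g t) + (\<Sum>t\<in>UNIV. Q0 s t * W t)"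
      using poisson_exists[OF stQ0 irr0 stat0] by blast
    define x where "x = (\<lambda>s. \<Sum>t\<in>UNIV. D s t * W t)"
    define B where "B = (\<Sum>s\<in>UNIV. \<bar>x s\<bar>)"
    have "eventually (\<lambda>\<delta>. norm (\<pi> \<delta> s0 - \<pi>0 s0) \<le> \<delta> * B) (at_right 0)"
      using ev
    proof (rule eventually_mono)
      fix \<delta> :: real assume d: "0 < \<delta> \<and> \<delta> < 1"
      have "(\<Sum>s\<in>UNIV. \<pi> \<delta> s * g s) = (\<Sum>t\<in>UNIV. \<pi>0 t * g t) + \<delta> * (\<Sum>s\<in>UNIV. \<pi> \<delta> s * x s)"
        unfolding x_def
      proof (rule shift_identity[OF stat])
        show "0 \<le> \<delta>" "\<delta> < 1" using d by auto
        show "Qd \<delta> s t = Q0 s t + \<delta> * D s t" for s t by (rule Qd_eq)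
        show "W s = g s - (\<Sum>t\<in>UNIV. \<pi>0 t * g t) + (\<Sum>t\<in>UNIV. Q0 s t * W t)" for s using W by blast
      qed
      then have eq: "\<pi> \<delta> s0 - \<pi>0 s0 = \<delta> * (\<Sum>s\<in>UNIV. \<pi> \<delta> s * x s)"
        by (simp add: g_def if_distrib[where f="\<lambda>u. _ * u"] cong: if_cong)
      have "\<bar>\<Sum>s\<in>UNIV. \<pi> \<delta> s * x s\<bar> \<le> B"
      proof -
        have "\<bar>\<Sum>s\<in>UNIV. \<pi> \<delta> s * x s\<bar> \<le> (\<Sum>s\<in>UNIV. \<bar>\<pi> \<delta> s * x s\<bar>)" by (rule sum_abs)
        also have "\<dots> \<le> B" unfolding B_def
        proof (rule sum_mono)
          fix s
          have "0 \<le> \<pi> \<delta> s" "\<pi> \<delta> s \<le> 1" using pi_nn pi_le1 d by auto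
          then show "\<bar>\<pi> \<delta> s * x s\<bar> \<le> \<bar>x s\<bar>" by (simp add: abs_mult mult_left_le_one_le)
        qed
        finally show ?thesis .
      qed
      then show "norm (\<pi> \<delta> s0 - \<pi>0 s0) \<le> \<delta> * B" using eq d by (simp add: abs_mult)
    qed
    moreover have "((\<lambda>\<delta>. \<delta> * B) \<longlongrightarrow> 0) (at_right 0)"
    proof -
      have "((\<lambda>\<delta>. \<delta> * B) \<longlongrightarrow> 0 * B) (at_right 0)" by (intro tendsto_intros)
      then show ?thesis by simp
    qed
    ultimately have "((\<lambda>\<delta>. \<pi> \<delta> s0 - \<pi>0 s0) \<longlongrightarrow> 0) (at_right 0)"
      by (rule Lim_null_comparison)
    then show ?thesis by (simp add: LIM_zero_iff)
  qed
  have lim: "((\<lambda>\<delta>. \<Sum>s\<in>UNIV. \<pi> \<delta> s * h s) \<longlongrightarrow> (\<Sum>s\<in>UNIV. \<pi>0 s * h s)) (at_right 0)" for h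
    by (rule tendsto_sum) (rule tendsto_mult[OF pt tendsto_const])
  define \<eta>0 where "\<eta>0 = eta A P r \<sigma>0"
  define f where "f = (\<lambda>s a. r s a - \<beta> * (r s a - \<eta>0)^2)"
  have f_eq: "f_sa A P r \<beta> \<sigma>0 = f" by (simp add: fun_eq_iff f_sa_def f_def \<eta>0_def)
  define F0 where "F0 = (\<lambda>s. \<Sum>a\<in>JA. \<sigma>0 s a * f s a)"
  define F1 where "F1 = (\<lambda>s. \<Sum>a\<in>JA. \<sigma>1 s a * f s a)"
  define R0 where "R0 = (\<lambda>s. \<Sum>a\<in>JA. \<sigma>0 s a * r s a)"
  define R1 where "R1 = (\<lambda>s. \<Sum>a\<in>JA. \<sigma>1 s a * r s a)"
  define J0 where "J0 = Jmv A P r \<beta> \<sigma>0"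
  have mixa: "\<And>\<delta> s a. mix_pol mu mu' \<delta> s a = (1 - \<delta>) * \<sigma>0 s a + \<delta> * \<sigma>1 s a"
    by (simp add: mix_pol_def \<sigma>0_def \<sigma>1_def)
  have mix_sum: "\<And>\<delta> s. (\<Sum>a\<in>JA. mix_pol mu mu' \<delta> s a) = 1"
    by (simp add: mixa sum.distrib s0 s1 flip: sum_distrib_left)
  have mix_lin: "\<And>\<delta> s h. (\<Sum>a\<in>JA. mix_pol mu mu' \<delta> s a * h a) = (1 - \<delta>) * (\<Sum>a\<in>JA. \<sigma>0 s a * h a) + \<delta> * (\<Sum>a\<in>JA. \<sigma>1 s a * h a)"
    by (simp add: mixa distrib_right sum.distrib mult.assoc flip: sum_distrib_left)
  have Jd: "Jmv A P r \<beta> (mix_pol mu mu' \<delta>) = (\<Sum>s\<in>UNIV. \<pi> \<delta> s * ((1 - \<delta>) * F0 s + \<delta> * F1 s))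
      + \<beta> * (eta A P r (mix_pol mu mu' \<delta>) - \<eta>0)^2" if d: "0 \<le> \<delta>" "\<delta> < 1" for \<delta>
  proof -
    have "Jmv A P r \<beta> (mix_pol mu mu' \<delta>) = (\<Sum>s\<in>UNIV. pi_pol A P (mix_pol mu mu' \<delta>) s *
        (\<Sum>a\<in>joint_actions A. mix_pol mu mu' \<delta> s a * (r s a - \<beta> * (r s a - \<eta>0)^2)))
          + \<beta> * (eta A P r (mix_pol mu mu' \<delta>) - \<eta>0)^2"
      by (rule J_decomp) (use fin pi_sum[OF d] mix_sum in \<open>auto simp: JA_def \<pi>_def\<close>)
    also have "\<dots> = (\<Sum>s\<in>UNIV. \<pi> \<delta> s * ((1 - \<delta>) * F0 s + \<delta> * F1 s))
      + \<beta> * (eta A P r (mix_pol mu mu' \<delta>) - \<eta>0)^2"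
      unfolding \<pi>_def F0_def F1_def f_def JA_def[symmetric] mix_lin ..
    finally show ?thesis .
  qed
  have J0_eq: "J0 = (\<Sum>s\<in>UNIV. \<pi>0 s * F0 s)"
  proof -
    have "J0 = (\<Sum>s\<in>UNIV. pi_pol A P \<sigma>0 s *
        (\<Sum>a\<in>joint_actions A. \<sigma>0 s a * (r s a - \<beta> * (r s a - \<eta>0)^2)))
          + \<beta> * (eta A P r \<sigma>0 - \<eta>0)^2"
      unfolding J0_def by (rule J_decomp) (use fin pi_sum[of 0] s0 pi0 in \<open>auto simp: JA_def \<pi>0_def\<close>)
    then show ?thesis by (simp add: pi0 F0_def f_def JA_def \<eta>0_def)
  qed
  have etad: "eta A P r (mix_pol mu mu' \<delta>) = (\<Sum>s\<in>UNIV. \<pi> \<delta> s * ((1 - \<delta>) * R0 s + \<delta> * R1 s))" for \<delta>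
    unfolding eta_def \<pi>_def R0_def R1_def JA_def[symmetric] mix_lin ..
  have eta0: "\<eta>0 = (\<Sum>s\<in>UNIV. \<pi>0 s * R0 s)"
    by (simp add: \<eta>0_def eta_def pi0 R0_def JA_def)
  define V where "V = V_f A P r \<beta> \<sigma>0"
  have Vsol: "V s = F0 s - J0 + (\<Sum>t\<in>UNIV. Q0 s t * V t)" for s
  proof -
    have "\<exists>V. poisson_sol A P r \<beta> \<sigma>0 V"
      using poisson_exists[OF stQ0 irr0 stat0, of F0] J0_eq
      by (simp add: poisson_sol_def f_s_def f_eq F0_def JA_def Q0_def J0_def)
    then have "poisson_sol A P r \<beta> \<sigma>0 V" unfolding V_def V_f_def by (rule someI_ex)
    moreover have fF0: "f_s A P r \<beta> \<sigma>0 = F0" by (simp add: fun_eq_iff f_s_def f_eq F0_def JA_def)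
    ultimately show ?thesis unfolding poisson_sol_def fF0 Q0_def[symmetric] J0_def[symmetric] by blast
  qed
  obtain VR where VR: "\<forall>s. VR s = R0 s - (\<Sum>t\<in>UNIV. \<pi>0 t * R0 t) + (\<Sum>t\<in>UNIV. Q0 s t * VR t)"
    using poisson_exists[OF stQ0 irr0 stat0, of R0] by blast
  define E where "E = (\<lambda>h \<delta>. \<Sum>s\<in>UNIV. \<pi> \<delta> s * h s)"
  define DV where "DV = (\<lambda>s. \<Sum>t\<in>UNIV. D s t * V t)"
  define DVR where "DVR = (\<lambda>s. \<Sum>t\<in>UNIV. D s t * VR t)"
  define G where "G = (\<lambda>\<delta>. E DV \<delta> + E (\<lambda>s. F1 s - F0 s) \<delta>
      + \<beta> * \<delta> * (E DVR \<delta> + E (\<lambda>s. R1 s - R0 s) \<delta>)^2)"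
  have Elin: "\<And>h k \<delta>. (\<Sum>s\<in>UNIV. \<pi> \<delta> s * ((1 - \<delta>) * h s + \<delta> * k s)) = E h \<delta> + \<delta> * E (\<lambda>s. k s - h s) \<delta>"
  proof -
    fix h k :: "'s \<Rightarrow> real" and \<delta> :: real
    have "(\<Sum>s\<in>UNIV. \<pi> \<delta> s * ((1 - \<delta>) * h s + \<delta> * k s)) = (\<Sum>s\<in>UNIV. \<pi> \<delta> s * h s + \<delta> * (\<pi> \<delta> s * (k s - h s)))"
      by (rule sum.cong) (simp_all add: algebra_simps)
    also have "\<dots> = E h \<delta> + \<delta> * E (\<lambda>s. k s - h s) \<delta>" by (simp only: E_def sum.distrib sum_distrib_left)
    finally show "(\<Sum>s\<in>UNIV. \<pi> \<delta> s * ((1 - \<delta>) * h s + \<delta> * k s)) = E h \<delta> + \<delta> * E (\<lambda>s. k s - h s) \<delta>" .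
  qed
  have quot: "eventually (\<lambda>\<delta>. (Jmv A P r \<beta> (mix_pol mu mu' \<delta>) - Jmv A P r \<beta> (mix_pol mu mu' 0)) / (\<delta> - 0) = G \<delta>) (at_right 0)"
    using ev
  proof (rule eventually_mono)
    fix \<delta> :: real assume d: "0 < \<delta> \<and> \<delta> < 1"
    then have d': "0 \<le> \<delta>" "\<delta> < 1" by auto
    have shF: "E F0 \<delta> = J0 + \<delta> * E DV \<delta>"
      unfolding E_def DV_def
    proof (rule shift_identity[OF stat[OF d']])
      show "Qd \<delta> s t = Q0 s t + \<delta> * D s t" for s t by (rule Qd_eq)
      show "V s = F0 s - J0 + (\<Sum>t\<in>UNIV. Q0 s t * V t)" for s by (rule Vsol)
    qed
    have shR: "E R0 \<delta> = \<eta>0 + \<delta> * E DVR \<delta>"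
      unfolding E_def DVR_def
    proof (rule shift_identity[OF stat[OF d']])
      show "Qd \<delta> s t = Q0 s t + \<delta> * D s t" for s t by (rule Qd_eq)
      show "VR s = R0 s - \<eta>0 + (\<Sum>t\<in>UNIV. Q0 s t * VR t)" for s unfolding eta0 using VR by blast
    qed
    have e: "eta A P r (mix_pol mu mu' \<delta>) - \<eta>0 = \<delta> * (E DVR \<delta> + E (\<lambda>s. R1 s - R0 s) \<delta>)"
    proof -
      have "eta A P r (mix_pol mu mu' \<delta>) = E R0 \<delta> + \<delta> * E (\<lambda>s. R1 s - R0 s) \<delta>"
        unfolding etad by (rule Elin)
      then show ?thesis using shR by (simp add: distrib_left)
    qed
    have "Jmv A P r \<beta> (mix_pol mu mu' \<delta>) = J0 + \<delta> * E DV \<delta> + \<delta> * E (\<lambda>s. F1 s - F0 s) \<delta>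
        + \<beta> * (\<delta> * (E DVR \<delta> + E (\<lambda>s. R1 s - R0 s) \<delta>))^2"
      using Jd[OF d'] e shF by (simp add: Elin)
    moreover have "Jmv A P r \<beta> (mix_pol mu mu' 0) = J0" by (simp add: mix0 J0_def)
    ultimately show "(Jmv A P r \<beta> (mix_pol mu mu' \<delta>) - Jmv A P r \<beta> (mix_pol mu mu' 0)) / (\<delta> - 0) = G \<delta>"
      using d by (simp add: G_def field_simps power2_eq_square)
  qed
  define L where "L = (\<Sum>s\<in>UNIV. \<pi>0 s * DV s) + (\<Sum>s\<in>UNIV. \<pi>0 s * (F1 s - F0 s))"
  have Glim: "(G \<longlongrightarrow> L) (at_right 0)"
  proof -
    have "(G \<longlongrightarrow> (\<Sum>s\<in>UNIV. \<pi>0 s * DV s) + (\<Sum>s\<in>UNIV. \<pi>0 s * (F1 s - F0 s))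
        + \<beta> * 0 * ((\<Sum>s\<in>UNIV. \<pi>0 s * DVR s) + (\<Sum>s\<in>UNIV. \<pi>0 s * (R1 s - R0 s)))^2) (at_right 0)"
      unfolding G_def E_def
      by (intro tendsto_add tendsto_mult tendsto_power lim tendsto_const tendsto_ident_at)
    then show ?thesis by (simp add: L_def)
  qed
  have target: "(\<Sum>s\<in>UNIV. pi_pol A P (joint_prob mu) s *
              (\<Sum>a\<in>joint_actions A. joint_prob mu' s a * A_f A P r \<beta> (joint_prob mu) s a)) = L"
  proof -
    have pw: "(\<Sum>a\<in>JA. \<sigma>1 s a * A_f A P r \<beta> \<sigma>0 s a) = DV s + (F1 s - F0 s)" for s
    proof -
      have Af: "A_f A P r \<beta> \<sigma>0 s a = f s a - J0 + (\<Sum>t\<in>UNIV. P s a t * V t) - V s" for a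
        by (simp add: A_f_def Q_f_def f_eq J0_def V_def)
      have sw: "(\<Sum>a\<in>JA. \<sigma>1 s a * (\<Sum>t\<in>UNIV. P s a t * V t)) = (\<Sum>t\<in>UNIV. Q1 s t * V t)"
      proof -
        have "(\<Sum>a\<in>JA. \<sigma>1 s a * (\<Sum>t\<in>UNIV. P s a t * V t)) = (\<Sum>a\<in>JA. \<Sum>t\<in>UNIV. \<sigma>1 s a * P s a t * V t)"
          by (simp add: sum_distrib_left mult.assoc)
        also have "\<dots> = (\<Sum>t\<in>UNIV. \<Sum>a\<in>JA. \<sigma>1 s a * P s a t * V t)" by (rule sum.swap)
        also have "\<dots> = (\<Sum>t\<in>UNIV. Q1 s t * V t)"
          by (simp add: Q1_def induced_chain_def JA_def sum_distrib_right)
        finally show ?thesis .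
      qed
      have "(\<Sum>a\<in>JA. \<sigma>1 s a * A_f A P r \<beta> \<sigma>0 s a)
          = (\<Sum>a\<in>JA. \<sigma>1 s a * f s a) - J0 * (\<Sum>a\<in>JA. \<sigma>1 s a)
            + (\<Sum>a\<in>JA. \<sigma>1 s a * (\<Sum>t\<in>UNIV. P s a t * V t)) - V s * (\<Sum>a\<in>JA. \<sigma>1 s a)"
        by (simp add: Af algebra_simps sum.distrib sum_subtractf sum_distrib_left)
      also have "\<dots> = F1 s - J0 + (\<Sum>t\<in>UNIV. Q1 s t * V t) - V s"
        using s1 sw by (simp add: F1_def)
      also have "\<dots> = DV s + (F1 s - F0 s)"
      proof -
        have "DV s = (\<Sum>t\<in>UNIV. Q1 s t * V t) - (\<Sum>t\<in>UNIV. Q0 s t * V t)"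
          by (simp add: DV_def D_def left_diff_distrib sum_subtractf)
        then show ?thesis using Vsol[of s] by linarith
      qed
      finally show ?thesis .
    qed
    have "(\<Sum>s\<in>UNIV. pi_pol A P (joint_prob mu) s *
              (\<Sum>a\<in>joint_actions A. joint_prob mu' s a * A_f A P r \<beta> (joint_prob mu) s a))
        = (\<Sum>s\<in>UNIV. \<pi>0 s * (DV s + (F1 s - F0 s)))"
      using pw by (simp add: pi0[unfolded \<sigma>0_def] JA_def \<sigma>0_def \<sigma>1_def)
    also have "\<dots> = L" by (simp add: L_def distrib_left sum.distrib)
    finally show ?thesis .
  qed
  have "((\<lambda>\<delta>. (Jmv A P r \<beta> (mix_pol mu mu' \<delta>) - Jmv A P r \<beta> (mix_pol mu mu' 0)) / (\<delta> - 0)) \<longlongrightarrow> L) (at_right 0)"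
    using tendsto_cong[OF quot] Glim by simp
  then show ?thesis
    unfolding target has_field_derivative_iff .
qed

end
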